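(* Let $G$ be a finite simple connected graph other than $K_2$, let $L$ be a subset of its leaves and let $L^c$ be the set of remaining leaves of $G$. Then \[ \rho\circ\lambda(G)=\rho\circ\lambda_L\circ\rho\circ\lambda_{L^c}(G). \]
   Context: A leaf is a vertex of degree one; two distinct vertices are siblings if they have the same closed neighborhood $N[v]=\{v\}\cup N(v)$. For a graph $G$ other than $K_2$ and a set $S$ of leaves of $G$, $\lambda_S(G)$ is the graph obtained by removing the vertices in $S$; $\lambda(G)$ is the graph obtained by removing all leaves of $G$. $\rho(G)$ is obtained from $G$ by contracting each maximal group of siblings to a single vertex. Equalities of graphs are understood up to the natural identification of vertices (i.e. as isomorphic graphs). *)

theory Defs
  imports Main
begin

type_synonym 'a graph = "'a set \<times> ('a \<times> 'a) set"

definition verts :: "'a graph \<Rightarrow> 'a set" where "verts G = fst G"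
definition edges :: "'a graph \<Rightarrow> ('a \<times> 'a) set" where "edges G = snd G"

definition simple_graph :: "'a graph \<Rightarrow> bool" where
  "simple_graph G \<longleftrightarrow> finite (verts G) \<and> edges G \<subseteq> verts G \<times> verts G
     \<and> sym (edges G) \<and> irrefl (edges G)"

definition connected_graph :: "'a graph \<Rightarrow> bool" where
  "connected_graph G \<longleftrightarrow> verts G \<noteq> {} \<and>
     (\<forall>u\<in>verts G. \<forall>v\<in>verts G. (u, v) \<in> (edges G)\<^sup>*)"

definition nbhd :: "'a graph \<Rightarrow> 'a \<Rightarrow> 'a set" where
  "nbhd G v = {u \<in> verts G. (v, u) \<in> edges G}"

definition closed_nbhd :: "'a graph \<Rightarrow> 'a \<Rightarrow> 'a set" where
  "closed_nbhd G v = insert v (nbhd G v)"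

definition degree :: "'a graph \<Rightarrow> 'a \<Rightarrow> nat" where
  "degree G v = card (nbhd G v)"

definition leaves :: "'a graph \<Rightarrow> 'a set" where
  "leaves G = {v \<in> verts G. degree G v = 1}"

definition siblings :: "'a graph \<Rightarrow> 'a \<Rightarrow> 'a \<Rightarrow> bool" where
  "siblings G u v \<longleftrightarrow> u \<in> verts G \<and> v \<in> verts G \<and> u \<noteq> v
     \<and> closed_nbhd G u = closed_nbhd G v"

definition graph_iso :: "'a graph \<Rightarrow> 'b graph \<Rightarrow> bool" where
  "graph_iso G H \<longleftrightarrow> (\<exists>f. bij_betw f (verts G) (verts H) \<and>
     (\<forall>u\<in>verts G. \<forall>v\<in>verts G. (u, v) \<in> edges G \<longleftrightarrow> (f u, f v) \<in> edges H))"

definition is_K2 :: "'a graph \<Rightarrow> bool" where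
  "is_K2 G \<longleftrightarrow> card (verts G) = 2 \<and> finite (verts G) \<and> edges G \<noteq> {}"

definition delete_verts :: "'a set \<Rightarrow> 'a graph \<Rightarrow> 'a graph" where
  "delete_verts S G = (verts G - S, edges G \<inter> ((verts G - S) \<times> (verts G - S)))"

text \<open>lambda_S: remove the leaves in S (S is meant to be a set of leaves; only
  those elements of S that are leaves are removed).\<close>
definition lambda_set :: "'a set \<Rightarrow> 'a graph \<Rightarrow> 'a graph" where
  "lambda_set S G = delete_verts (S \<inter> leaves G) G"

definition lambda :: "'a graph \<Rightarrow> 'a graph" where
  "lambda G = delete_verts (leaves G) G"

definition sib_class :: "'a graph \<Rightarrow> 'a \<Rightarrow> 'a set" where
  "sib_class G v = {u \<in> verts G. closed_nbhd G u = closed_nbhd G v}"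

definition rho :: "'a graph \<Rightarrow> 'a set graph" where
  "rho G = (sib_class G ` verts G,
            {(sib_class G u, sib_class G v) | u v. (u, v) \<in> edges G
                \<and> sib_class G u \<noteq> sib_class G v})"

end

theory Submission
  imports Defs
begin

lemma verts_pair[simp]: "verts (A, B) = A" by (simp add: verts_def)
lemma edges_pair[simp]: "edges (A, B) = B" by (simp add: edges_def)

lemma sc_eq:
  assumes "u \<in> verts G" "v \<in> verts G"
  shows "sib_class G u = sib_class G v \<longleftrightarrow> closed_nbhd G u = closed_nbhd G v"
proof
  assume "sib_class G u = sib_class G v"
  moreover have "u \<in> sib_class G u" using assms by (simp add: sib_class_def)
  ultimately show "closed_nbhd G u = closed_nbhd G v" by (simp add: sib_class_def)
qed (simp add: sib_class_def)

lemma sc_mem: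
  assumes "x \<in> sib_class G u" shows "x \<in> verts G" "sib_class G x = sib_class G u"
  using assms by (auto simp: sib_class_def)

lemma cn_sym:
  assumes "sym (edges G)" "y \<in> closed_nbhd G x" "x \<in> verts G"
  shows "x \<in> closed_nbhd G y"
  using assms by (auto simp: closed_nbhd_def nbhd_def sym_def)

lemma rho_edge:
  assumes "sym (edges G)" "edges G \<subseteq> verts G \<times> verts G" "u \<in> verts G" "v \<in> verts G"
  shows "(sib_class G u, sib_class G v) \<in> edges (rho G) \<longleftrightarrow>
           (u, v) \<in> edges G \<and> closed_nbhd G u \<noteq> closed_nbhd G v"
proof
  assume "(u, v) \<in> edges G \<and> closed_nbhd G u \<noteq> closed_nbhd G v"
  then show "(sib_class G u, sib_class G v) \<in> edges (rho G)"
    using sc_eq[OF assms(3,4)] by (auto simp: rho_def)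
next
  assume "(sib_class G u, sib_class G v) \<in> edges (rho G)"
  then obtain x y where xy: "(x, y) \<in> edges G" "sib_class G u = sib_class G x"
    "sib_class G v = sib_class G y" "sib_class G x \<noteq> sib_class G y"
    by (auto simp: rho_def)
  have xV: "x \<in> verts G" "y \<in> verts G" using xy(1) assms(2) by auto
  have Nx: "closed_nbhd G x = closed_nbhd G u" "closed_nbhd G y = closed_nbhd G v"
    using sc_eq[OF assms(3) xV(1)] sc_eq[OF assms(4) xV(2)] xy by auto
  have neq: "closed_nbhd G u \<noteq> closed_nbhd G v"
    using sc_eq[OF assms(3,4)] xy by auto
  have "y \<in> closed_nbhd G x" using xy(1) xV by (auto simp: closed_nbhd_def nbhd_def)
  hence "y \<in> closed_nbhd G u" using Nx by simp
  hence "u \<in> closed_nbhd G y" using cn_sym[OF assms(1) _ assms(3)] by blast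
  hence "u \<in> closed_nbhd G v" using Nx by simp
  moreover have "u \<noteq> v" using neq by auto
  ultimately have "(v, u) \<in> edges G" by (auto simp: closed_nbhd_def nbhd_def)
  hence "(u, v) \<in> edges G" using assms(1) by (auto simp: sym_def)
  with neq show "(u, v) \<in> edges G \<and> closed_nbhd G u \<noteq> closed_nbhd G v" by simp
qed

lemma rho_iso:
  assumes sQ: "sym (edges Q)" and eQ: "edges Q \<subseteq> verts Q \<times> verts Q"
    and sQ': "sym (edges Q')" and eQ': "edges Q' \<subseteq> verts Q' \<times> verts Q'"
    and img: "p ` verts Q = verts Q'"
    and edg: "\<And>u v. u \<in> verts Q \<Longrightarrow> v \<in> verts Q \<Longrightarrow>
          (p u, p v) \<in> edges Q' \<longleftrightarrow> (u, v) \<in> edges Q \<and> p u \<noteq> p v"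
    and tw: "\<And>u v. u \<in> verts Q \<Longrightarrow> v \<in> verts Q \<Longrightarrow> p u = p v \<Longrightarrow>
          closed_nbhd Q u = closed_nbhd Q v"
  shows "graph_iso (rho Q) (rho Q')"
proof -
  have cn: "closed_nbhd Q' (p u) = p ` closed_nbhd Q u" if u: "u \<in> verts Q" for u
  proof
    show "closed_nbhd Q' (p u) \<subseteq> p ` closed_nbhd Q u"
    proof
      fix z assume z: "z \<in> closed_nbhd Q' (p u)"
      show "z \<in> p ` closed_nbhd Q u"
      proof (cases "z = p u")
        case True then show ?thesis by (auto simp: closed_nbhd_def)
      next
        case False
        then have "z \<in> verts Q'" "(p u, z) \<in> edges Q'" using z by (auto simp: closed_nbhd_def nbhd_def)
        then obtain x where x: "x \<in> verts Q" "z = p x" using img by auto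
        then have "(u, x) \<in> edges Q" using edg[OF u x(1)] \<open>(p u, z) \<in> edges Q'\<close> by auto
        then show ?thesis using x by (auto simp: closed_nbhd_def nbhd_def)
      qed
    qed
  next
    show "p ` closed_nbhd Q u \<subseteq> closed_nbhd Q' (p u)"
    proof
      fix z assume "z \<in> p ` closed_nbhd Q u"
      then obtain x where x: "x \<in> closed_nbhd Q u" "z = p x" by auto
      show "z \<in> closed_nbhd Q' (p u)"
      proof (cases "x = u")
        case True then show ?thesis using x by (auto simp: closed_nbhd_def)
      next
        case False
        then have xe: "x \<in> verts Q" "(u, x) \<in> edges Q" using x by (auto simp: closed_nbhd_def nbhd_def)
        show ?thesis
        proof (cases "p u = p x")
          case True then show ?thesis using x by (auto simp: closed_nbhd_def)
        next
          case False
          then have "(p u, p x) \<in> edges Q'" using edg[OF u xe(1)] xe by auto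
          moreover have "p x \<in> verts Q'" using img xe by auto
          ultimately show ?thesis using x by (auto simp: closed_nbhd_def nbhd_def)
        qed
      qed
    qed
  qed
  have twin: "closed_nbhd Q' (p u) = closed_nbhd Q' (p v) \<longleftrightarrow> closed_nbhd Q u = closed_nbhd Q v"
    if u: "u \<in> verts Q" and v: "v \<in> verts Q" for u v
  proof
    assume "closed_nbhd Q u = closed_nbhd Q v" then show "closed_nbhd Q' (p u) = closed_nbhd Q' (p v)"
      using cn u v by simp
  next
    assume h: "closed_nbhd Q' (p u) = closed_nbhd Q' (p v)"
    have sub: "closed_nbhd Q a \<subseteq> closed_nbhd Q b"
      if a: "a \<in> verts Q" and b: "b \<in> verts Q" and hab: "p ` closed_nbhd Q a = p ` closed_nbhd Q b" for a b
    proof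
      fix x assume x: "x \<in> closed_nbhd Q a"
      then obtain y where y: "y \<in> closed_nbhd Q b" "p x = p y" using hab by blast
      have xV: "x \<in> verts Q" using x a by (auto simp: closed_nbhd_def nbhd_def)
      have yV: "y \<in> verts Q" using y b by (auto simp: closed_nbhd_def nbhd_def)
      have "closed_nbhd Q x = closed_nbhd Q y" using tw[OF xV yV y(2)] .
      moreover have "b \<in> closed_nbhd Q y" using cn_sym[OF sQ y(1) b] .
      ultimately have "b \<in> closed_nbhd Q x" by simp
      then show "x \<in> closed_nbhd Q b" using cn_sym[OF sQ _ xV] by blast
    qed
    have "p ` closed_nbhd Q u = p ` closed_nbhd Q v" using h cn u v by simp
    then show "closed_nbhd Q u = closed_nbhd Q v" using sub u v by (metis subset_antisym)
  qed
  define f where "f C = sib_class Q' (p (SOME x. x \<in> C))" for C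
  have fsc: "f (sib_class Q u) = sib_class Q' (p u)" if u: "u \<in> verts Q" for u
  proof -
    have "u \<in> sib_class Q u" using u by (simp add: sib_class_def)
    then have ex: "(SOME x. x \<in> sib_class Q u) \<in> sib_class Q u" by (metis someI)
    define x where "x = (SOME x. x \<in> sib_class Q u)"
    have xin: "x \<in> sib_class Q u" using ex unfolding x_def .
    have xV: "x \<in> verts Q" and "sib_class Q x = sib_class Q u" using sc_mem[OF xin] by auto
    then have "closed_nbhd Q x = closed_nbhd Q u" using sc_eq[OF xV u] by simp
    then have "closed_nbhd Q' (p x) = closed_nbhd Q' (p u)" using twin xV u by simp
    moreover have "p x \<in> verts Q'" "p u \<in> verts Q'" using img xV u by auto
    ultimately have "sib_class Q' (p x) = sib_class Q' (p u)" using sc_eq by metis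
    then show ?thesis unfolding f_def x_def by simp
  qed
  have bij: "bij_betw f (verts (rho Q)) (verts (rho Q'))"
    unfolding bij_betw_def
  proof
    show "inj_on f (verts (rho Q))"
    proof (rule inj_onI)
      fix A B assume A: "A \<in> verts (rho Q)" and B: "B \<in> verts (rho Q)" and fe: "f A = f B"
      obtain u where u: "u \<in> verts Q" "A = sib_class Q u" using A by (auto simp: rho_def)
      obtain v where v: "v \<in> verts Q" "B = sib_class Q v" using B by (auto simp: rho_def)
      have "sib_class Q' (p u) = sib_class Q' (p v)" using fe fsc u v by simp
      moreover have "p u \<in> verts Q'" "p v \<in> verts Q'" using img u v by auto
      ultimately have "closed_nbhd Q' (p u) = closed_nbhd Q' (p v)" using sc_eq by metis
      then have "closed_nbhd Q u = closed_nbhd Q v" using twin u v by simp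
      then show "A = B" using u v sc_eq by metis
    qed
  next
    have "f ` verts (rho Q) = (\<lambda>u. sib_class Q' (p u)) ` verts Q"
      by (auto simp: rho_def fsc image_iff)
    also have "\<dots> = sib_class Q' ` p ` verts Q" by (simp add: image_image)
    also have "\<dots> = sib_class Q' ` verts Q'" using img by simp
    finally show "f ` verts (rho Q) = verts (rho Q')" by (simp add: rho_def)
  qed
  have "\<forall>A\<in>verts (rho Q). \<forall>B\<in>verts (rho Q). (A, B) \<in> edges (rho Q) \<longleftrightarrow> (f A, f B) \<in> edges (rho Q')"
  proof (intro ballI)
    fix A B assume A: "A \<in> verts (rho Q)" and B: "B \<in> verts (rho Q)"
    obtain u where u: "u \<in> verts Q" "A = sib_class Q u" using A by (auto simp: rho_def)
    obtain v where v: "v \<in> verts Q" "B = sib_class Q v" using B by (auto simp: rho_def)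
    have pu: "p u \<in> verts Q'" "p v \<in> verts Q'" using img u v by auto
    have "(A, B) \<in> edges (rho Q) \<longleftrightarrow> (u, v) \<in> edges Q \<and> closed_nbhd Q u \<noteq> closed_nbhd Q v"
      using rho_edge[OF sQ eQ u(1) v(1)] u v by simp
    also have "\<dots> \<longleftrightarrow> (p u, p v) \<in> edges Q' \<and> closed_nbhd Q' (p u) \<noteq> closed_nbhd Q' (p v)"
      using edg[OF u(1) v(1)] twin[OF u(1) v(1)] tw[OF u(1) v(1)] by auto
    also have "\<dots> \<longleftrightarrow> (f A, f B) \<in> edges (rho Q')"
      using rho_edge[OF sQ' eQ' pu] fsc u v by simp
    finally show "(A, B) \<in> edges (rho Q) \<longleftrightarrow> (f A, f B) \<in> edges (rho Q')" .
  qed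
  with bij show ?thesis unfolding graph_iso_def by blast
qed


lemma rho_nbhd:
  assumes "sym (edges G)" "edges G \<subseteq> verts G \<times> verts G" "u \<in> verts G"
  shows "nbhd (rho G) (sib_class G u) =
     sib_class G ` {y \<in> nbhd G u. closed_nbhd G u \<noteq> closed_nbhd G y}"
proof
  show "nbhd (rho G) (sib_class G u) \<subseteq> sib_class G ` {y \<in> nbhd G u. closed_nbhd G u \<noteq> closed_nbhd G y}"
  proof
    fix D assume "D \<in> nbhd (rho G) (sib_class G u)"
    then obtain y where y: "y \<in> verts G" "D = sib_class G y" "(sib_class G u, sib_class G y) \<in> edges (rho G)"
      by (auto simp: nbhd_def rho_def[of G] simp del: edges_pair)
    then have "(u, y) \<in> edges G \<and> closed_nbhd G u \<noteq> closed_nbhd G y"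
      using rho_edge[OF assms y(1)] by simp
    then show "D \<in> sib_class G ` {y \<in> nbhd G u. closed_nbhd G u \<noteq> closed_nbhd G y}"
      using y by (auto simp: nbhd_def)
  qed
next
  show "sib_class G ` {y \<in> nbhd G u. closed_nbhd G u \<noteq> closed_nbhd G y} \<subseteq> nbhd (rho G) (sib_class G u)"
  proof
    fix D assume "D \<in> sib_class G ` {y \<in> nbhd G u. closed_nbhd G u \<noteq> closed_nbhd G y}"
    then obtain y where y: "y \<in> verts G" "(u, y) \<in> edges G" "closed_nbhd G u \<noteq> closed_nbhd G y"
      "D = sib_class G y" by (auto simp: nbhd_def)
    then have "(sib_class G u, sib_class G y) \<in> edges (rho G)"
      using rho_edge[OF assms y(1)] by simp
    then show "D \<in> nbhd (rho G) (sib_class G u)" using y by (auto simp: nbhd_def rho_def)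
  qed
qed

lemma leaf_nb:
  assumes "l \<in> leaves G" obtains w where "nbhd G l = {w}"
  using assms unfolding leaves_def degree_def by (metis (mono_tags, lifting) card_1_singletonE mem_Collect_eq)

lemma not_K2_leaf:
  assumes sg: "simple_graph G" and cg: "connected_graph G" and nk: "\<not> is_K2 G"
    and l: "l \<in> leaves G" and w: "nbhd G l = {w}"
  shows "w \<notin> leaves G"
proof
  assume wl: "w \<in> leaves G"
  have lw: "(l, w) \<in> edges G" "w \<in> verts G" using w by (auto simp: nbhd_def)
  have lV: "l \<in> verts G" using l by (auto simp: leaves_def)
  have "(w, l) \<in> edges G" using lw sg by (auto simp: simple_graph_def sym_def)
  then have "l \<in> nbhd G w" using lV by (auto simp: nbhd_def)
  moreover obtain z where z: "nbhd G w = {z}" using leaf_nb[OF wl] .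
  ultimately have wn: "nbhd G w = {l}" by auto
  have reach: "y \<in> {l, w}" if "(l, y) \<in> (edges G)\<^sup>*" for y
    using that
  proof (induction rule: rtrancl_induct)
    case base then show ?case by simp
  next
    case (step y z)
    have "z \<in> verts G" using step(2) sg by (auto simp: simple_graph_def)
    then have "z \<in> nbhd G y" using step(2) by (auto simp: nbhd_def)
    then show ?case using step(3) w wn by auto
  qed
  have "verts G = {l, w}" using cg reach lV lw(2) by (auto simp: connected_graph_def)
  moreover have "l \<noteq> w" using lw sg by (auto simp: simple_graph_def irrefl_def)
  moreover have "edges G \<noteq> {}" using lw by auto
  ultimately have "is_K2 G" by (simp add: is_K2_def)
  with nk show False by simp
qed


theorem lemma5p2:
  fixes G :: "'a graph" and L :: "'a set"
  assumes "simple_graph G" and "connected_graph G" and "\<not> is_K2 G"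
    and "L \<subseteq> leaves G"
  shows "graph_iso (rho (lambda G))
           (rho (lambda_set (sib_class (lambda_set (leaves G - L) G) ` L)
                   (rho (lambda_set (leaves G - L) G))))"
proof -
  note sg = assms(1) and cg = assms(2) and nk = assms(3) and LL = assms(4)
  define V where "V = verts G"
  define E where "E = edges G"
  define V0 where "V0 = V - leaves G"
  define VH where "VH = V - (leaves G - L)"
  define H where "H = lambda_set (leaves G - L) G"
  define K where "K = lambda G"
  define p where "p = sib_class H"
  define R where "R = rho H"
  define S where "S = p ` L"
  define M where "M = lambda_set S R"
  have symE: "sym E" and EV: "E \<subseteq> V \<times> V" using sg by (auto simp: simple_graph_def V_def E_def)
  have LV: "leaves G \<subseteq> V" by (auto simp: leaves_def V_def)
  have Hd: "verts H = VH" "edges H = E \<inter> (VH \<times> VH)"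
    by (auto simp: H_def lambda_set_def delete_verts_def VH_def V_def E_def)
  have Kd: "verts K = V0" "edges K = E \<inter> (V0 \<times> V0)"
    by (auto simp: K_def lambda_def delete_verts_def V0_def V_def E_def)
  have V0H: "V0 \<subseteq> VH" by (auto simp: V0_def VH_def)
  have symH: "sym (edges H)" using symE by (auto simp: Hd sym_def)
  have EH: "edges H \<subseteq> verts H \<times> verts H" by (auto simp: Hd)
  have symK: "sym (edges K)" using symE by (auto simp: Kd sym_def)
  have EK: "edges K \<subseteq> verts K \<times> verts K" by (auto simp: Kd)
  have Rd: "verts R = p ` VH" by (simp add: R_def rho_def p_def Hd)
  have symR: "sym (edges R)" using symH unfolding R_def rho_def sym_def edges_pair by blast
  have ER: "edges R \<subseteq> verts R \<times> verts R" using EH by (auto simp: R_def rho_def)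
  have Md: "verts M = verts R - (S \<inter> leaves R)" "edges M = edges R \<inter> (verts M \<times> verts M)"
    by (auto simp: M_def lambda_set_def delete_verts_def)
  have symM: "sym (edges M)" using symR by (auto simp: Md(2) sym_def)
  have EM: "edges M \<subseteq> verts M \<times> verts M" by (auto simp: Md(2))
  have redge: "(p u, p v) \<in> edges R \<longleftrightarrow> (u, v) \<in> edges H \<and> closed_nbhd H u \<noteq> closed_nbhd H v"
    if "u \<in> VH" "v \<in> VH" for u v
    using rho_edge[OF symH EH, of u v] that by (simp add: Hd p_def R_def)
  have rnb: "nbhd R (p u) = p ` {y \<in> nbhd H u. closed_nbhd H u \<noteq> closed_nbhd H y}"
    if "u \<in> VH" for u
    using rho_nbhd[OF symH EH, of u] that by (simp add: Hd p_def R_def)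
  have peq: "p u = p v \<longleftrightarrow> closed_nbhd H u = closed_nbhd H v" if "u \<in> VH" "v \<in> VH" for u v
    using sc_eq[of u H v] that by (simp add: Hd p_def)
  have leafinfo: "\<exists>w. w \<in> V0 \<and> nbhd H l = {w} \<and> closed_nbhd H l = {l, w} \<and> l \<in> VH
      \<and> (\<forall>x\<in>VH. closed_nbhd H x = closed_nbhd H l \<longrightarrow> x = l \<or> x = w)" if l: "l \<in> L" for l
  proof -
    have lG: "l \<in> leaves G" using l LL by auto
    obtain w where w: "nbhd G l = {w}" using leaf_nb[OF lG] .
    have wnl: "w \<notin> leaves G" using not_K2_leaf[OF sg cg nk lG w] .
    have wV: "w \<in> V" "(l, w) \<in> E" using w by (auto simp: nbhd_def V_def E_def)
    have w0: "w \<in> V0" using wV wnl by (simp add: V0_def)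
    have lH: "l \<in> VH" using l lG LV by (auto simp: VH_def)
    have nH: "nbhd H l = {w}"
    proof -
      have "nbhd H l = {u \<in> VH. (l, u) \<in> E}" using lH by (auto simp: nbhd_def Hd)
      also have "\<dots> = nbhd G l \<inter> VH" by (auto simp: nbhd_def V_def E_def VH_def)
      finally show ?thesis using w w0 V0H by auto
    qed
    have cH: "closed_nbhd H l = {l, w}" using nH by (simp add: closed_nbhd_def)
    have "\<forall>x\<in>VH. closed_nbhd H x = closed_nbhd H l \<longrightarrow> x = l \<or> x = w"
      using cH by (auto simp: closed_nbhd_def)
    then show ?thesis using w0 nH cH lH by blast
  qed
  have img: "p ` V0 = verts M"
  proof
    show "p ` V0 \<subseteq> verts M"
    proof
      fix C assume "C \<in> p ` V0"
      then obtain v where v: "v \<in> V0" "C = p v" by auto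
      have vH: "v \<in> VH" using v V0H by auto
      have "C \<notin> S \<inter> leaves R"
      proof
        assume "C \<in> S \<inter> leaves R"
        then obtain l where l: "l \<in> L" "C = p l" and Cl: "C \<in> leaves R" by (auto simp: S_def)
        obtain w where w: "w \<in> V0" "nbhd H l = {w}" "closed_nbhd H l = {l, w}" "l \<in> VH"
          "\<forall>x\<in>VH. closed_nbhd H x = closed_nbhd H l \<longrightarrow> x = l \<or> x = w"
          using leafinfo[OF l(1)] by blast
        have cv: "closed_nbhd H v = closed_nbhd H l" using peq[OF vH w(4)] v l by simp
        have "v \<noteq> l" using v l LL by (auto simp: V0_def)
        then have "v = w" using w(5) cv vH by blast
        then have cw: "closed_nbhd H w = closed_nbhd H l" using cv by simp
        have "nbhd R (p l) = {}" using rnb[OF w(4)] w(2) cw by auto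
        then show False using Cl l by (simp add: leaves_def degree_def)
      qed
      then show "C \<in> verts M" using v vH by (simp add: Md Rd)
    qed
  next
    show "verts M \<subseteq> p ` V0"
    proof
      fix C assume C: "C \<in> verts M"
      then obtain x where x: "x \<in> VH" "C = p x" and CS: "C \<notin> S \<inter> leaves R" by (auto simp: Md Rd)
      show "C \<in> p ` V0"
      proof (cases "x \<in> V0")
        case True then show ?thesis using x by auto
      next
        case False
        then have xL: "x \<in> L" using x by (auto simp: V0_def VH_def)
        obtain w where w: "w \<in> V0" "nbhd H x = {w}" "closed_nbhd H x = {x, w}" "x \<in> VH"
          using leafinfo[OF xL] by blast
        have wH: "w \<in> VH" using w V0H by auto
        show ?thesis
        proof (cases "closed_nbhd H x = closed_nbhd H w")
          case True then have "p x = p w" using peq[OF x(1) wH] by simp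
          then show ?thesis using x w by auto
        next
          case False
          then have "nbhd R (p x) = {p w}" using rnb[OF x(1)] w(2) by auto
          then have "C \<in> leaves R" using x Rd by (simp add: leaves_def degree_def)
          moreover have "C \<in> S" using x xL by (simp add: S_def)
          ultimately show ?thesis using CS by simp
        qed
      qed
    qed
  qed
  have edg: "(p u, p v) \<in> edges M \<longleftrightarrow> (u, v) \<in> edges K \<and> p u \<noteq> p v"
    if u: "u \<in> verts K" and v: "v \<in> verts K" for u v
  proof -
    have u0: "u \<in> V0" "v \<in> V0" using u v Kd by auto
    have uH: "u \<in> VH" "v \<in> VH" using u0 V0H by auto
    have "p u \<in> verts M" "p v \<in> verts M" using img u0 by auto
    then have "(p u, p v) \<in> edges M \<longleftrightarrow> (p u, p v) \<in> edges R" by (simp add: Md(2))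
    also have "\<dots> \<longleftrightarrow> (u, v) \<in> edges H \<and> p u \<noteq> p v" using redge[OF uH] peq[OF uH] by simp
    also have "\<dots> \<longleftrightarrow> (u, v) \<in> edges K \<and> p u \<noteq> p v" using uH u0 by (simp add: Hd Kd)
    finally show ?thesis .
  qed
  have tw: "closed_nbhd K u = closed_nbhd K v"
    if u: "u \<in> verts K" and v: "v \<in> verts K" and e: "p u = p v" for u v
  proof -
    have u0: "u \<in> V0" "v \<in> V0" using u v Kd by auto
    have uH: "u \<in> VH" "v \<in> VH" using u0 V0H by auto
    have cK: "closed_nbhd K z = closed_nbhd H z \<inter> V0" if "z \<in> V0" for z
      using that V0H by (auto simp: closed_nbhd_def nbhd_def Hd Kd)
    have "closed_nbhd H u = closed_nbhd H v" using peq[OF uH] e by simp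
    then show ?thesis using cK u0 by simp
  qed
  have "graph_iso (rho K) (rho M)"
    by (rule rho_iso[OF symK EK symM EM _ edg tw]) (use img Kd in auto)
  then show ?thesis by (simp add: K_def M_def S_def p_def R_def H_def)
qed

end
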